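(* Let $D=\mathrm{diag}(1,-1,1,-1,\ldots)=(1,-x)$, let $R$ be a Riordan involution (respectively, a Riordan pseudo involution), and put $U=RD$ and $V=DR$. Then for each positive integer $n$: (a) the columns of $(U+D)^n$ (respectively, $(R+D)^n$) are $R$-invariant sequences of the first kind; (b) the columns of $(U-D)^n$ (respectively, $(R-D)^n$) are inverse $R$-invariant sequences of the first kind; (c) the columns of $(V^T+D)^n$ (respectively, $(R^T+D)^n$) are $R$-invariant sequences of the second kind; (d) the columns of $(V^T-D)^n$ (respectively, $(R^T-D)^n$) are inverse $R$-invariant sequences of the second kind.
   Context: All matrices are infinite, indexed by $0,1,2,\ldots$. A Riordan matrix $(g(x),f(x))$, with $g(x)=g_0+g_1x+\cdots$, $g_0\ne0$, and $f(x)=f_1x+\cdots$, $f_1\ne0$, is the infinite lower triangular matrix whose $j$-th column has generating function $g(x)f(x)^j$. A Riordan matrix $R$ is a Riordan involution if $R^2=I$ and a Riordan pseudo involution if $(RD)^2=I$. For a Riordan involution $R$, a vector $\mathbf x\in\mathbb{R}^\infty$ is an $R$-invariant sequence of the first kind if $R\mathbf x=\mathbf x$, an inverse $R$-invariant sequence of the first kind if $R\mathbf x=-\mathbf x$, an $R$-invariant sequence of the second kind if $R^T\mathbf x=\mathbf x$, and an inverse $R$-invariant sequence of the second kind if $R^T\mathbf x=-\mathbf x$. For a Riordan pseudo involution $R$, the same notions are defined with $R$ replaced by $RD$ (first kind) and $R^T$ replaced by $R^TD$ (second kind). *)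

theory Defs
  imports "HOL-Analysis.Analysis" "HOL-Computational_Algebra.Formal_Power_Series"
begin

type_synonym imat = "nat \<Rightarrow> nat \<Rightarrow> real"
type_synonym ivec = "nat \<Rightarrow> real"

definition mmul :: "imat \<Rightarrow> imat \<Rightarrow> imat" where
  "mmul A B = (\<lambda>i j. infsum (\<lambda>k. A i k * B k j) UNIV)"

definition mvmul :: "imat \<Rightarrow> ivec \<Rightarrow> ivec" where
  "mvmul A x = (\<lambda>i. infsum (\<lambda>k. A i k * x k) UNIV)"

definition idm :: imat where
  "idm = (\<lambda>i j. if i = j then 1 else 0)"

definition mtrans :: "imat \<Rightarrow> imat" where
  "mtrans A = (\<lambda>i j. A j i)"

definition madd :: "imat \<Rightarrow> imat \<Rightarrow> imat" where
  "madd A B = (\<lambda>i j. A i j + B i j)"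

definition msub :: "imat \<Rightarrow> imat \<Rightarrow> imat" where
  "msub A B = (\<lambda>i j. A i j - B i j)"

primrec mpow :: "imat \<Rightarrow> nat \<Rightarrow> imat" where
  "mpow A 0 = idm"
| "mpow A (Suc n) = mmul (mpow A n) A"

definition col :: "imat \<Rightarrow> nat \<Rightarrow> ivec" where
  "col A j = (\<lambda>i. A i j)"

definition riordan_array :: "real fps \<Rightarrow> real fps \<Rightarrow> imat" where
  "riordan_array g f = (\<lambda>i j. fps_nth (g * f ^ j) i)"

definition is_riordan :: "imat \<Rightarrow> bool" where
  "is_riordan R \<longleftrightarrow> (\<exists>g f. fps_nth g 0 \<noteq> 0 \<and> fps_nth f 0 = 0 \<and> fps_nth f 1 \<noteq> 0
                        \<and> R = riordan_array g f)"

definition Dm :: imat where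
  "Dm = riordan_array 1 (- fps_X)"

definition riordan_involution :: "imat \<Rightarrow> bool" where
  "riordan_involution R \<longleftrightarrow> is_riordan R \<and> mmul R R = idm"

definition riordan_pseudo_involution :: "imat \<Rightarrow> bool" where
  "riordan_pseudo_involution R \<longleftrightarrow> is_riordan R \<and> mmul (mmul R Dm) (mmul R Dm) = idm"

definition inv_first :: "imat \<Rightarrow> ivec \<Rightarrow> bool" where
  "inv_first R x \<longleftrightarrow> mvmul R x = x"
definition inverse_inv_first :: "imat \<Rightarrow> ivec \<Rightarrow> bool" where
  "inverse_inv_first R x \<longleftrightarrow> mvmul R x = (\<lambda>i. - x i)"
definition inv_second :: "imat \<Rightarrow> ivec \<Rightarrow> bool" where
  "inv_second R x \<longleftrightarrow> mvmul (mtrans R) x = x"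
definition inverse_inv_second :: "imat \<Rightarrow> ivec \<Rightarrow> bool" where
  "inverse_inv_second R x \<longleftrightarrow> mvmul (mtrans R) x = (\<lambda>i. - x i)"

text \<open>Invariant sequences for a Riordan pseudo involution R (R replaced by RD, R^T by R^T D).\<close>
definition pinv_first :: "imat \<Rightarrow> ivec \<Rightarrow> bool" where
  "pinv_first R x \<longleftrightarrow> mvmul (mmul R Dm) x = x"
definition inverse_pinv_first :: "imat \<Rightarrow> ivec \<Rightarrow> bool" where
  "inverse_pinv_first R x \<longleftrightarrow> mvmul (mmul R Dm) x = (\<lambda>i. - x i)"
definition pinv_second :: "imat \<Rightarrow> ivec \<Rightarrow> bool" where
  "pinv_second R x \<longleftrightarrow> mvmul (mmul (mtrans R) Dm) x = x"
definition inverse_pinv_second :: "imat \<Rightarrow> ivec \<Rightarrow> bool" where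
  "inverse_pinv_second R x \<longleftrightarrow> mvmul (mmul (mtrans R) Dm) x = (\<lambda>i. - x i)"

end

theory Submission
  imports Defs
begin

definition lt :: "imat \<Rightarrow> bool" where "lt A \<longleftrightarrow> (\<forall>i k. i < k \<longrightarrow> A i k = 0)"
definition ut :: "imat \<Rightarrow> bool" where "ut A \<longleftrightarrow> (\<forall>i k. k < i \<longrightarrow> A i k = 0)"
definition mneg :: "imat \<Rightarrow> imat" where "mneg A = (\<lambda>i j. - A i j)"

lemma fps_pow_low:
  fixes f h :: "real fps"
  assumes "fps_nth f 0 = 0" "i < j"
  shows "fps_nth (h * f ^ j) i = 0"
  using assms(2)
proof (induction j arbitrary: i)
  case 0 then show ?case by simp
next
  case (Suc j)
  have "fps_nth (h * f ^ Suc j) i = fps_nth ((h * f ^ j) * f) i" by (simp only: power_Suc2 mult.assoc)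
  also have "\<dots> = (\<Sum>k=0..i. fps_nth (h * f ^ j) k * fps_nth f (i - k))" by (simp add: fps_mult_nth)
  also have "\<dots> = 0"
  proof (rule sum.neutral, intro ballI)
    fix k assume k: "k \<in> {0..i}"
    show "fps_nth (h * f ^ j) k * fps_nth f (i - k) = 0"
    proof (cases "k < j")
      case True then show ?thesis using Suc.IH by simp
    next
      case False then have "k = i" using k Suc.prems by auto
      then show ?thesis using assms(1) by simp
    qed
  qed
  finally show ?case .
qed

lemma riordan_lt: "is_riordan R \<Longrightarrow> lt R"
  unfolding is_riordan_def lt_def riordan_array_def using fps_pow_low by auto

lemma negX_pow: "(- fps_X :: real fps) ^ j = fps_const ((-1)^j) * fps_X ^ j"
proof -
  have "(- fps_X :: real fps) = fps_const (-1) * fps_X" by simp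
  then show ?thesis by (simp only: power_mult_distrib fps_const_power)
qed
lemma Dm_eq: "Dm = (\<lambda>i j. if i = j then (-1)^i else 0)"
proof (intro ext)
  fix i j
  show "Dm i j = (if i = j then (-1)^i else 0)"
    unfolding Dm_def riordan_array_def mult_1 negX_pow fps_mult_left_const_nth fps_X_power_nth
    by simp
qed

lemma lt_Dm: "lt Dm" by (simp add: lt_def Dm_eq)
lemma ut_Dm: "ut Dm" by (simp add: ut_def Dm_eq)
lemma lt_idm: "lt idm" by (simp add: lt_def idm_def)
lemma ut_idm: "ut idm" by (simp add: ut_def idm_def)
lemma mtrans_Dm: "mtrans Dm = Dm" by (auto simp: mtrans_def Dm_eq fun_eq_iff)
lemma mtrans_idm: "mtrans idm = idm" by (auto simp: mtrans_def idm_def fun_eq_iff)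
lemma mtrans_mtrans: "mtrans (mtrans A) = A" by (simp add: mtrans_def)
lemma lt_ut: "lt A \<Longrightarrow> ut (mtrans A)" by (simp add: lt_def ut_def mtrans_def)

lemma mtrans_mmul: "mtrans (mmul A B) = mmul (mtrans B) (mtrans A)"
  by (simp add: mtrans_def mmul_def mult.commute)

lemma mmul_idm_left[simp]: "mmul idm A = A"
proof -
  have "infsum (\<lambda>k. idm i k * A k j) UNIV = A i j" for i j
    by (subst infsum_cong_neutral[where T="{i}" and g="\<lambda>k. A k j"]) (auto simp: idm_def)
  then show ?thesis by (simp add: mmul_def fun_eq_iff)
qed

lemma mmul_idm_right[simp]: "mmul A idm = A"
proof -
  have "infsum (\<lambda>k. A i k * idm k j) UNIV = A i j" for i j
    by (subst infsum_cong_neutral[where T="{j}" and g="\<lambda>k. A i k"]) (auto simp: idm_def)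
  then show ?thesis by (simp add: mmul_def fun_eq_iff)
qed

lemma mmul_lt: "lt A \<Longrightarrow> i \<le> n \<Longrightarrow> mmul A B i j = (\<Sum>k\<le>n. A i k * B k j)"
  unfolding mmul_def
proof -
  assume a: "lt A" "i \<le> n"
  have "infsum (\<lambda>k. A i k * B k j) UNIV = infsum (\<lambda>k. A i k * B k j) {..n}"
    by (rule infsum_cong_neutral) (use a in \<open>auto simp: lt_def\<close>)
  then show "infsum (\<lambda>k. A i k * B k j) UNIV = (\<Sum>k\<le>n. A i k * B k j)" by simp
qed

lemma mmul_ut: "ut B \<Longrightarrow> j \<le> n \<Longrightarrow> mmul A B i j = (\<Sum>k\<le>n. A i k * B k j)"
  unfolding mmul_def
proof -
  assume a: "ut B" "j \<le> n"
  have "infsum (\<lambda>k. A i k * B k j) UNIV = infsum (\<lambda>k. A i k * B k j) {..n}"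
    by (rule infsum_cong_neutral) (use a in \<open>auto simp: ut_def\<close>)
  then show "infsum (\<lambda>k. A i k * B k j) UNIV = (\<Sum>k\<le>n. A i k * B k j)" by simp
qed

lemma lt_mmul: "lt A \<Longrightarrow> lt B \<Longrightarrow> lt (mmul A B)"
  unfolding lt_def by (auto simp: mmul_lt[of A, OF _ order_refl] lt_def intro!: sum.neutral)

lemma ut_mmul: "ut A \<Longrightarrow> ut B \<Longrightarrow> ut (mmul A B)"
  by (auto simp: ut_def mmul_ut[of B, OF _ order_refl] intro!: sum.neutral)

lemma lt_madd: "lt A \<Longrightarrow> lt B \<Longrightarrow> lt (madd A B)" by (simp add: lt_def madd_def)
lemma lt_msub: "lt A \<Longrightarrow> lt B \<Longrightarrow> lt (msub A B)" by (simp add: lt_def msub_def)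
lemma ut_madd: "ut A \<Longrightarrow> ut B \<Longrightarrow> ut (madd A B)" by (simp add: ut_def madd_def)
lemma ut_msub: "ut A \<Longrightarrow> ut B \<Longrightarrow> ut (msub A B)" by (simp add: ut_def msub_def)

lemma mmul_lt0: "lt A \<Longrightarrow> mmul A B i j = (\<Sum>k\<le>i. A i k * B k j)"
  by (rule mmul_lt) auto
lemma mmul_ut0: "ut B \<Longrightarrow> mmul A B i j = (\<Sum>k\<le>j. A i k * B k j)"
  by (rule mmul_ut) auto

lemma mmul_assoc_lt:
  assumes "lt A" "lt B" "lt C"
  shows "mmul (mmul A B) C = mmul A (mmul B C)"
proof (intro ext)
  fix i j
  have e1: "mmul A B i k = (\<Sum>l\<le>i. A i l * B l k)" for k using mmul_lt0[OF assms(1)] .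
  have "mmul (mmul A B) C i j = (\<Sum>k\<le>i. mmul A B i k * C k j)"
    using mmul_lt0[OF lt_mmul[OF assms(1,2)]] .
  also have "\<dots> = (\<Sum>k\<le>i. (\<Sum>l\<le>i. A i l * B l k) * C k j)" by (simp only: e1)
  also have "\<dots> = (\<Sum>k\<le>i. \<Sum>l\<le>i. A i l * (B l k * C k j))"
    by (simp add: sum_distrib_right mult.assoc)
  also have "\<dots> = (\<Sum>l\<le>i. \<Sum>k\<le>i. A i l * (B l k * C k j))"
    by (rule sum.swap)
  also have "\<dots> = (\<Sum>l\<le>i. A i l * (\<Sum>k\<le>i. B l k * C k j))"
    by (simp add: sum_distrib_left)
  also have "\<dots> = (\<Sum>l\<le>i. A i l * mmul B C l j)"
    by (intro sum.cong refl) (simp add: mmul_lt[OF assms(2)])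
  also have "\<dots> = mmul A (mmul B C) i j" using mmul_lt0[OF assms(1)] by simp
  finally show "mmul (mmul A B) C i j = mmul A (mmul B C) i j" .
qed

lemma mmul_assoc_ut:
  assumes "ut A" "ut B" "ut C"
  shows "mmul (mmul A B) C = mmul A (mmul B C)"
proof -
  have l: "lt (mtrans X)" if "ut X" for X using that by (simp add: lt_def ut_def mtrans_def)
  have "mtrans (mmul (mmul A B) C) = mmul (mtrans C) (mmul (mtrans B) (mtrans A))"
    by (simp add: mtrans_mmul)
  also have "\<dots> = mmul (mmul (mtrans C) (mtrans B)) (mtrans A)"
    by (intro mmul_assoc_lt[symmetric] l assms)
  also have "\<dots> = mtrans (mmul A (mmul B C))" by (simp add: mtrans_mmul)
  finally show ?thesis by (metis mtrans_mtrans)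
qed

lemma mmul_madd_lt: "lt A \<Longrightarrow> mmul A (madd B C) = madd (mmul A B) (mmul A C)"
  by (simp add: fun_eq_iff madd_def mmul_lt0 distrib_left sum.distrib)
lemma mmul_msub_lt: "lt A \<Longrightarrow> mmul A (msub B C) = msub (mmul A B) (mmul A C)"
  by (simp add: fun_eq_iff msub_def mmul_lt0 right_diff_distrib sum_subtractf)
lemma lt_mneg: "lt A \<Longrightarrow> lt (mneg A)" by (simp add: lt_def mneg_def)
lemma ut_mneg: "ut A \<Longrightarrow> ut (mneg A)" by (simp add: ut_def mneg_def)
lemma mmul_mneg_lt: "lt A \<Longrightarrow> mmul (mneg A) B = mneg (mmul A B)"
  by (simp add: fun_eq_iff mmul_lt0 lt_mneg) (simp add: mneg_def mmul_lt0 sum_negf)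
lemma mmul_madd_ut: "ut B \<Longrightarrow> ut C \<Longrightarrow> mmul A (madd B C) = madd (mmul A B) (mmul A C)"
  using mmul_ut0[OF ut_madd, of B C A] by (simp add: fun_eq_iff mmul_ut0 madd_def distrib_left sum.distrib)
lemma mmul_msub_ut: "ut B \<Longrightarrow> ut C \<Longrightarrow> mmul A (msub B C) = msub (mmul A B) (mmul A C)"
  using mmul_ut0[OF ut_msub, of B C A] by (simp add: fun_eq_iff mmul_ut0 msub_def right_diff_distrib sum_subtractf)
lemma mmul_mneg_ut: "ut B \<Longrightarrow> mmul (mneg A) B = mneg (mmul A B)"
  by (simp add: fun_eq_iff mmul_ut0 mneg_def sum_negf)


lemma lt_mpow: "lt A \<Longrightarrow> lt (mpow A n)"
  by (induction n) (auto simp: lt_idm lt_mmul)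
lemma ut_mpow: "ut A \<Longrightarrow> ut (mpow A n)"
  by (induction n) (auto simp: ut_idm ut_mmul)

lemma mpow_Suc_lt: "lt A \<Longrightarrow> mpow A (Suc n) = mmul A (mpow A n)"
proof (induction n)
  case 0 then show ?case by simp
next
  case (Suc n)
  have "mpow A (Suc (Suc n)) = mmul (mmul A (mpow A n)) A" using Suc by simp
  also have "\<dots> = mmul A (mmul (mpow A n) A)" using Suc.prems lt_mpow mmul_assoc_lt by blast
  finally show ?case by simp
qed

lemma mpow_Suc_ut: "ut A \<Longrightarrow> mpow A (Suc n) = mmul A (mpow A n)"
proof (induction n)
  case 0 then show ?case by simp
next
  case (Suc n)
  have "mpow A (Suc (Suc n)) = mmul (mmul A (mpow A n)) A" using Suc by simp
  also have "\<dots> = mmul A (mmul (mpow A n) A)" using Suc.prems ut_mpow mmul_assoc_ut by blast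
  finally show ?case by simp
qed

lemma key_pos_lt: assumes "lt X" "lt A" "mmul X A = A"
  shows "mmul X (mpow A (Suc n)) = mpow A (Suc n)"
  using assms by (simp only: mpow_Suc_lt mmul_assoc_lt[symmetric] lt_mpow)

lemma key_neg_lt: assumes "lt X" "lt A" "mmul X A = mneg A"
  shows "mmul X (mpow A (Suc n)) = mneg (mpow A (Suc n))"
  using assms by (simp only: mpow_Suc_lt mmul_assoc_lt[symmetric] lt_mpow mmul_mneg_lt)

lemma key_pos_ut: assumes "ut X" "ut A" "mmul X A = A"
  shows "mmul X (mpow A (Suc n)) = mpow A (Suc n)"
  using assms by (simp only: mpow_Suc_ut mmul_assoc_ut[symmetric] ut_mpow)

lemma key_neg_ut: assumes "ut X" "ut A" "mmul X A = mneg A"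
  shows "mmul X (mpow A (Suc n)) = mneg (mpow A (Suc n))"
  using assms by (simp only: mpow_Suc_ut mmul_assoc_ut[symmetric] ut_mpow mmul_mneg_ut)

lemma mvmul_col: "mvmul A (col M j) = col (mmul A M) j"
  by (simp add: mvmul_def col_def mmul_def)
lemma neg_col: "(\<lambda>i. - col M j i) = col (mneg M) j"
  by (simp add: col_def mneg_def)

lemma Dm_Dm: "mmul Dm Dm = idm"
proof -
  have "infsum (\<lambda>k. Dm i k * Dm k j) UNIV = idm i j" for i j
    by (subst infsum_cong_neutral[where T="{i}" and g="\<lambda>k. idm i j"])
       (auto simp: idm_def Dm_eq power_mult_distrib[symmetric])
  then show ?thesis by (simp add: mmul_def fun_eq_iff)
qed

lemma madd_comm: "madd A B = madd B A" by (simp add: madd_def fun_eq_iff add.commute)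
lemma msub_swap: "msub A B = mneg (msub B A)" by (simp add: msub_def mneg_def fun_eq_iff)


theorem lemma5p1:
  fixes R :: imat and n :: nat
  assumes "n \<ge> 1"
  shows "(riordan_involution R \<longrightarrow>
           (let U = mmul R Dm; V = mmul Dm R in
             (\<forall>j. inv_first R (col (mpow (madd U Dm) n) j)) \<and>
             (\<forall>j. inverse_inv_first R (col (mpow (msub U Dm) n) j)) \<and>
             (\<forall>j. inv_second R (col (mpow (madd (mtrans V) Dm) n) j)) \<and>
             (\<forall>j. inverse_inv_second R (col (mpow (msub (mtrans V) Dm) n) j))))
       \<and> (riordan_pseudo_involution R \<longrightarrow>
             (\<forall>j. pinv_first R (col (mpow (madd R Dm) n) j)) \<and>
             (\<forall>j. inverse_pinv_first R (col (mpow (msub R Dm) n) j)) \<and>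
             (\<forall>j. pinv_second R (col (mpow (madd (mtrans R) Dm) n) j)) \<and>
             (\<forall>j. inverse_pinv_second R (col (mpow (msub (mtrans R) Dm) n) j)))"
proof -
  obtain m where n: "n = Suc m" using assms by (cases n) auto
  show ?thesis
  proof (rule conjI; rule impI)
    assume inv: "riordan_involution R"
    then have lR: "lt R" and RR: "mmul R R = idm"
      by (auto simp: riordan_involution_def riordan_lt)
    define U where "U = mmul R Dm"
    define Vt where "Vt = mmul (mtrans R) Dm"
    define Rt where "Rt = mtrans R"
    have lU: "lt U" unfolding U_def by (intro lt_mmul lR lt_Dm)
    have uRt: "ut Rt" unfolding Rt_def by (rule lt_ut[OF lR])
    have uVt: "ut Vt" unfolding Vt_def by (intro ut_mmul lt_ut[OF lR] ut_Dm)
    have VtE: "mtrans (mmul Dm R) = Vt" unfolding Vt_def by (simp add: mtrans_mmul mtrans_Dm)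
    have RtRt: "mmul Rt Rt = idm" unfolding Rt_def
      using mtrans_mmul[of R R] RR mtrans_idm by simp
    have RU: "mmul R U = Dm" unfolding U_def
      using mmul_assoc_lt[OF lR lR lt_Dm] RR by simp
    have RD: "mmul R Dm = U" by (simp add: U_def)
    have RtVt: "mmul Rt Vt = Dm" unfolding Vt_def Rt_def[symmetric]
      using mmul_assoc_ut[OF uRt uRt ut_Dm] RtRt by simp
    have RtD: "mmul Rt Dm = Vt" by (simp add: Vt_def Rt_def)
    have a: "mmul R (madd U Dm) = madd U Dm"
      by (simp only: mmul_madd_lt[OF lR] RU RD madd_comm[of Dm U])
    have b: "mmul R (msub U Dm) = mneg (msub U Dm)"
      by (simp only: mmul_msub_lt[OF lR] RU RD msub_swap[of Dm U])
    have c: "mmul Rt (madd Vt Dm) = madd Vt Dm"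
      by (simp only: mmul_madd_ut[OF uVt ut_Dm] RtVt RtD madd_comm[of Dm Vt])
    have d: "mmul Rt (msub Vt Dm) = mneg (msub Vt Dm)"
      by (simp only: mmul_msub_ut[OF uVt ut_Dm] RtVt RtD msub_swap[of Dm Vt])
    show "let U = mmul R Dm; V = mmul Dm R in
             (\<forall>j. inv_first R (col (mpow (madd U Dm) n) j)) \<and>
             (\<forall>j. inverse_inv_first R (col (mpow (msub U Dm) n) j)) \<and>
             (\<forall>j. inv_second R (col (mpow (madd (mtrans V) Dm) n) j)) \<and>
             (\<forall>j. inverse_inv_second R (col (mpow (msub (mtrans V) Dm) n) j))"
      unfolding Let_def U_def[symmetric] VtE n inv_first_def inverse_inv_first_def
        inv_second_def inverse_inv_second_def mvmul_col neg_col Rt_def[symmetric]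
      using key_pos_lt[OF lR lt_madd[OF lU lt_Dm] a] key_neg_lt[OF lR lt_msub[OF lU lt_Dm] b]
        key_pos_ut[OF uRt ut_madd[OF uVt ut_Dm] c] key_neg_ut[OF uRt ut_msub[OF uVt ut_Dm] d]
      by simp
  next
    assume pinv: "riordan_pseudo_involution R"
    define P where "P = mmul R Dm"
    then have lR: "lt R" and PP: "mmul P P = idm"
      using pinv by (auto simp: riordan_pseudo_involution_def riordan_lt)
    have lP: "lt P" unfolding P_def by (intro lt_mmul lR lt_Dm)
    have PD: "mmul P Dm = R" unfolding P_def
      using mmul_assoc_lt[OF lR lt_Dm lt_Dm] Dm_Dm by simp
    have PR: "mmul P R = Dm"
    proof -
      have "mmul P R = mmul (mmul P R) (mmul Dm Dm)" by (simp add: Dm_Dm)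
      also have "\<dots> = mmul (mmul (mmul P R) Dm) Dm"
        using mmul_assoc_lt[OF lt_mmul[OF lP lR] lt_Dm lt_Dm] by simp
      also have "mmul (mmul P R) Dm = mmul P P"
        using mmul_assoc_lt[OF lP lR lt_Dm] P_def by simp
      finally show ?thesis using PP by simp
    qed
    define Rt where "Rt = mtrans R"
    define X where "X = mmul Rt Dm"
    have uRt: "ut Rt" unfolding Rt_def by (rule lt_ut[OF lR])
    have uX: "ut X" unfolding X_def by (intro ut_mmul uRt ut_Dm)
    define Q where "Q = mmul Dm Rt"
    have uQ: "ut Q" unfolding Q_def by (intro ut_mmul uRt ut_Dm)
    have QQ: "mmul Q Q = idm"
    proof -
      have "mtrans P = Q" unfolding P_def Q_def Rt_def by (simp add: mtrans_mmul mtrans_Dm)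
      then show ?thesis using PP mtrans_mmul[of P P] mtrans_idm by simp
    qed
    have XD: "mmul X Dm = Rt" unfolding X_def
      using mmul_assoc_ut[OF uRt ut_Dm ut_Dm] Dm_Dm by simp
    have XR: "mmul X Rt = Dm"
    proof -
      have DQ: "mmul Dm Q = Rt" unfolding Q_def
        using mmul_assoc_ut[OF ut_Dm ut_Dm uRt] Dm_Dm by simp
      have "Dm = mmul Dm (mmul Q Q)" using QQ by simp
      also have "\<dots> = mmul Rt Q" using mmul_assoc_ut[OF ut_Dm uQ uQ] DQ by simp
      also have "\<dots> = mmul X Rt" unfolding X_def Q_def
        using mmul_assoc_ut[OF uRt ut_Dm uRt] by simp
      finally show ?thesis by simp
    qed
    have a: "mmul P (madd R Dm) = madd R Dm"
      by (simp only: mmul_madd_lt[OF lP] PR PD madd_comm[of Dm R])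
    have b: "mmul P (msub R Dm) = mneg (msub R Dm)"
      by (simp only: mmul_msub_lt[OF lP] PR PD msub_swap[of Dm R])
    have c: "mmul X (madd Rt Dm) = madd Rt Dm"
      by (simp only: mmul_madd_ut[OF uRt ut_Dm] XR XD madd_comm[of Dm Rt])
    have d: "mmul X (msub Rt Dm) = mneg (msub Rt Dm)"
      by (simp only: mmul_msub_ut[OF uRt ut_Dm] XR XD msub_swap[of Dm Rt])
    show "(\<forall>j. pinv_first R (col (mpow (madd R Dm) n) j)) \<and>
             (\<forall>j. inverse_pinv_first R (col (mpow (msub R Dm) n) j)) \<and>
             (\<forall>j. pinv_second R (col (mpow (madd (mtrans R) Dm) n) j)) \<and>
             (\<forall>j. inverse_pinv_second R (col (mpow (msub (mtrans R) Dm) n) j))"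
      unfolding n pinv_first_def inverse_pinv_first_def
        pinv_second_def inverse_pinv_second_def mvmul_col neg_col P_def[symmetric]
        Rt_def[symmetric] X_def[symmetric]
      using key_pos_lt[OF lP lt_madd[OF lR lt_Dm] a] key_neg_lt[OF lP lt_msub[OF lR lt_Dm] b]
        key_pos_ut[OF uX ut_madd[OF uRt ut_Dm] c] key_neg_ut[OF uX ut_msub[OF uRt ut_Dm] d]
      by simp
  qed
qed

end
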